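(* Let $X,Y\in\mathcal L^2$ have identical continuous and strictly increasing marginal distribution functions, let $C$ be the copula of $(X,Y)$, and let $r\in[-1,1]$. The following are equivalent: (i) $(X,Y)\in\mathrm{IC}_r$; (ii) $\frac{C(u,v)+C(v,u)}{2}=rM(u,v)+(1-r)\Pi(u,v)$ for all $(u,v)\in[0,1]^2$; (iii) $r\in[0,1]$ and the positive Fréchet copula $C_r^{\mathrm F}$ is the copula of the random rearrangement of $(X,Y)$.
   Context: $\mathcal L^2$ is the set of non-degenerate real random variables with finite variance. $(X,Y)\in\mathrm{IC}_r$ means $\mathrm{Corr}(X,Y)=\mathrm{Corr}(g(X),g(Y))=r$ for every measurable $g$ with $g(X),g(Y)\in\mathcal L^2$. $M(u,v)=\min(u,v)$, $\Pi(u,v)=uv$, and $C_r^{\mathrm F}=rM+(1-r)\Pi$. With $(\pi_1,\pi_2)$ uniform on $\{(1,2),(2,1)\}$ independent of $(X_1,X_2)=(X,Y)$, the random rearrangement is $(X_{\pi_1},X_{\pi_2})$, whose law is the equal mixture of the laws of $(X,Y)$ and $(Y,X)$. *)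

theory Defs
  imports "HOL-Probability.Probability"
begin

definition dfun :: "'a measure \<Rightarrow> ('a \<Rightarrow> real) \<Rightarrow> real \<Rightarrow> real" where
  "dfun M X x = measure M {\<omega> \<in> space M. X \<omega> \<le> x}"

definition mean :: "'a measure \<Rightarrow> ('a \<Rightarrow> real) \<Rightarrow> real" where
  "mean M X = integral\<^sup>L M X"

definition var :: "'a measure \<Rightarrow> ('a \<Rightarrow> real) \<Rightarrow> real" where
  "var M X = integral\<^sup>L M (\<lambda>\<omega>. (X \<omega> - mean M X)\<^sup>2)"

definition cov :: "'a measure \<Rightarrow> ('a \<Rightarrow> real) \<Rightarrow> ('a \<Rightarrow> real) \<Rightarrow> real" where
  "cov M X Y = integral\<^sup>L M (\<lambda>\<omega>. (X \<omega> - mean M X) * (Y \<omega> - mean M Y))"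

definition corr :: "'a measure \<Rightarrow> ('a \<Rightarrow> real) \<Rightarrow> ('a \<Rightarrow> real) \<Rightarrow> real" where
  "corr M X Y = cov M X Y / sqrt (var M X * var M Y)"

definition L2 :: "'a measure \<Rightarrow> ('a \<Rightarrow> real) \<Rightarrow> bool" where
  "L2 M X \<longleftrightarrow> X \<in> borel_measurable M \<and> integrable M (\<lambda>\<omega>. (X \<omega>)\<^sup>2) \<and> var M X > 0"

definition IC :: "'a measure \<Rightarrow> real \<Rightarrow> ('a \<Rightarrow> real) \<Rightarrow> ('a \<Rightarrow> real) \<Rightarrow> bool" where
  "IC M r X Y \<longleftrightarrow> corr M X Y = r \<and>
     (\<forall>g \<in> borel_measurable borel. L2 M (\<lambda>\<omega>. g (X \<omega>)) \<and> L2 M (\<lambda>\<omega>. g (Y \<omega>))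
        \<longrightarrow> corr M (\<lambda>\<omega>. g (X \<omega>)) (\<lambda>\<omega>. g (Y \<omega>)) = r)"

text \<open>Bivariate copula (values on [0,1]^2 matter).\<close>
definition is_copula :: "(real \<Rightarrow> real \<Rightarrow> real) \<Rightarrow> bool" where
  "is_copula C \<longleftrightarrow>
     (\<forall>u \<in> {0..1}. C u 0 = 0 \<and> C 0 u = 0 \<and> C u 1 = u \<and> C 1 u = u) \<and>
     (\<forall>u1 u2 v1 v2. 0 \<le> u1 \<and> u1 \<le> u2 \<and> u2 \<le> 1 \<and> 0 \<le> v1 \<and> v1 \<le> v2 \<and> v2 \<le> 1 \<longrightarrow>
        C u2 v2 - C u2 v1 - C u1 v2 + C u1 v1 \<ge> 0)"

definition copula_of :: "'a measure \<Rightarrow> ('a \<Rightarrow> real) \<Rightarrow> ('a \<Rightarrow> real) \<Rightarrow> (real \<Rightarrow> real \<Rightarrow> real) \<Rightarrow> bool" where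
  "copula_of M X Y C \<longleftrightarrow> is_copula C \<and>
     (\<forall>x y. measure M {\<omega> \<in> space M. X \<omega> \<le> x \<and> Y \<omega> \<le> y} = C (dfun M X x) (dfun M Y y))"

definition M_cop :: "real \<Rightarrow> real \<Rightarrow> real" where "M_cop u v = min u v"
definition Pi_cop :: "real \<Rightarrow> real \<Rightarrow> real" where "Pi_cop u v = u * v"
definition frechet :: "real \<Rightarrow> real \<Rightarrow> real \<Rightarrow> real" where
  "frechet r u v = r * M_cop u v + (1 - r) * Pi_cop u v"

text \<open>Random rearrangement: pair with an independent fair coin b;
  (pi1,pi2) = (1,2) if b, (2,1) otherwise.\<close>
definition rearr_space :: "'a measure \<Rightarrow> ('a \<times> bool) measure" where
  "rearr_space M = M \<Otimes>\<^sub>M measure_pmf (bernoulli_pmf (1/2))"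
definition rearr1 :: "('a \<Rightarrow> real) \<Rightarrow> ('a \<Rightarrow> real) \<Rightarrow> 'a \<times> bool \<Rightarrow> real" where
  "rearr1 X Y p = (if snd p then X (fst p) else Y (fst p))"
definition rearr2 :: "('a \<Rightarrow> real) \<Rightarrow> ('a \<Rightarrow> real) \<Rightarrow> 'a \<times> bool \<Rightarrow> real" where
  "rearr2 X Y p = (if snd p then Y (fst p) else X (fst p))"

end

theory Submission
  imports Defs
begin

lemma measure_pair_Times_prob:
  assumes "prob_space N" "prob_space K" "A \<in> sets N" "B \<in> sets K"
  shows "measure (N \<Otimes>\<^sub>M K) (A \<times> B) = measure N A * measure K B"
proof -
  interpret K: prob_space K by fact
  have "emeasure (N \<Otimes>\<^sub>M K) (A \<times> B) = emeasure N A * emeasure K B"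
    using assms K.emeasure_pair_measure_Times by blast
  then show ?thesis unfolding measure_def by (simp add: enn2real_mult)
qed

lemma atMost_generator_eq:
  fixes Q1 Q2 :: "(real \<times> real) measure"
  assumes "finite_measure Q1" "finite_measure Q2" "sets Q1 = sets borel" "sets Q2 = sets borel"
    and eq: "\<And>x y. measure Q1 {..(x,y)} = measure Q2 {..(x,y)}"
  shows "Q1 = Q2"
proof (rule measure_eqI_generator_eq[where \<Omega>=UNIV and E="range atMost" and A="\<lambda>i. {..(real i, real i)}"])
  show "Int_stable (range atMost :: (real\<times>real) set set)"
    unfolding Int_stable_def
  proof (safe)
    fix a b :: "real\<times>real"
    have "{..a} \<inter> {..b} = {..inf a b}" by auto
    then show "{..a} \<inter> {..b} \<in> range atMost" by blast
  qed
  show "range atMost \<subseteq> Pow (UNIV :: (real\<times>real) set)" by auto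
  have s: "sets (borel :: (real\<times>real) measure) = sigma_sets UNIV (range atMost)"
    by (subst borel_eq_atMost) (simp add: sets_measure_of)
  show "sets Q1 = sigma_sets UNIV (range atMost)" using assms(3) s by simp
  show "sets Q2 = sigma_sets UNIV (range atMost)" using assms(4) s by simp
  fix Z :: "(real\<times>real) set" assume "Z \<in> range atMost"
  then obtain z where z: "Z = {..z}" by auto
  obtain x y where "z = (x,y)" by (cases z)
  then show "emeasure Q1 Z = emeasure Q2 Z"
    using eq[of x y] z finite_measure.emeasure_eq_measure[OF assms(1)] finite_measure.emeasure_eq_measure[OF assms(2)]
    by simp
next
  show "range (\<lambda>i. {..(real i, real i)}) \<subseteq> range atMost" by auto
  show "(\<Union>i. {..(real i, real i)}) = (UNIV :: (real\<times>real) set)"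
  proof (safe)
    fix a b :: real
    obtain n :: nat where "max a b \<le> real n" using real_arch_simple by blast
    then show "(a,b) \<in> (\<Union>i. {..(real i, real i)})" by (auto simp: less_eq_prod_def)
  qed auto
  fix i show "emeasure Q1 {..(real i, real i)} \<noteq> \<infinity>"
    using finite_measure.emeasure_eq_measure[OF assms(1)] by simp
qed

lemma measure_coin_union:
  assumes N: "prob_space N" and p: "0 \<le> p" "p \<le> 1" and AB: "A \<in> sets N" "B \<in> sets N"
  shows "measure (N \<Otimes>\<^sub>M measure_pmf (bernoulli_pmf p)) (A \<times> {True} \<union> B \<times> {False})
     = p * measure N A + (1 - p) * measure N B"
proof -
  let ?K = "measure_pmf (bernoulli_pmf p)"
  interpret PP: pair_prob_space N ?K
    by (simp add: pair_prob_space_def pair_sigma_finite_def N prob_space_measure_pmf prob_space_imp_sigma_finite)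
  have "measure (N \<Otimes>\<^sub>M ?K) (A \<times> {True} \<union> B \<times> {False}) =
      measure (N \<Otimes>\<^sub>M ?K) (A \<times> {True}) + measure (N \<Otimes>\<^sub>M ?K) (B \<times> {False})"
    using AB by (intro PP.finite_measure_Union) auto
  also have "\<dots> = measure N A * measure ?K {True} + measure N B * measure ?K {False}"
    using AB N by (simp add: measure_pair_Times_prob prob_space_measure_pmf)
  also have "\<dots> = p * measure N A + (1 - p) * measure N B"
    using p by (simp add: measure_pmf_single)
  finally show ?thesis .
qed

lemma frechet_copula:
  assumes "0 \<le> r" "r \<le> 1" shows "is_copula (frechet r)"
  unfolding is_copula_def
proof (intro conjI ballI allI impI)
  fix u :: real assume "u \<in> {0..1}"
  then show "frechet r u 0 = 0" "frechet r 0 u = 0" "frechet r u 1 = u" "frechet r 1 u = u"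
    by (auto simp: frechet_def M_cop_def Pi_cop_def algebra_simps)
next
  fix u1 u2 v1 v2 :: real
  assume h: "0 \<le> u1 \<and> u1 \<le> u2 \<and> u2 \<le> 1 \<and> 0 \<le> v1 \<and> v1 \<le> v2 \<and> v2 \<le> 1"
  have m: "min u2 v2 - min u2 v1 - min u1 v2 + min u1 v1 \<ge> 0"
    using h by (auto simp: min_def)
  have p: "u2 * v2 - u2 * v1 - u1 * v2 + u1 * v1 \<ge> 0"
  proof -
    have "u2 * v2 - u2 * v1 - u1 * v2 + u1 * v1 = (u2 - u1) * (v2 - v1)" by (simp add: algebra_simps)
    also have "\<dots> \<ge> 0" using h by simp
    finally show ?thesis .
  qed
  have "frechet r u2 v2 - frechet r u2 v1 - frechet r u1 v2 + frechet r u1 v1 =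
     r * (min u2 v2 - min u2 v1 - min u1 v2 + min u1 v1) + (1 - r) * (u2 * v2 - u2 * v1 - u1 * v2 + u1 * v1)"
    by (simp add: frechet_def M_cop_def Pi_cop_def algebra_simps)
  also have "\<dots> \<ge> 0" using m p assms by simp
  finally show "frechet r u2 v2 - frechet r u2 v1 - frechet r u1 v2 + frechet r u1 v1 \<ge> 0" .
qed

lemma pfm: "prob_space N \<Longrightarrow> finite_measure N" unfolding prob_space_def by blast

lemma integral_bernoulli:
  fixes f :: "bool \<Rightarrow> real"
  assumes "0 \<le> p" "p \<le> 1"
  shows "(\<integral>c. f c \<partial>measure_pmf (bernoulli_pmf p)) = p * f True + (1 - p) * f False"
  using assms by (subst integral_measure_pmf[of UNIV]) (auto simp: UNIV_bool)

lemma abs_mult_le_sq: "\<bar>(a::real) * b\<bar> \<le> a\<^sup>2 + b\<^sup>2"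
proof -
  have "0 \<le> (\<bar>a\<bar> - \<bar>b\<bar>)\<^sup>2" by simp
  then have "2 * (\<bar>a\<bar> * \<bar>b\<bar>) \<le> \<bar>a\<bar>\<^sup>2 + \<bar>b\<bar>\<^sup>2" by (simp add: power2_diff)
  moreover have "0 \<le> \<bar>a\<bar> * \<bar>b\<bar>" by simp
  ultimately have "\<bar>a\<bar> * \<bar>b\<bar> \<le> \<bar>a\<bar>\<^sup>2 + \<bar>b\<bar>\<^sup>2" by linarith
  then show ?thesis by (simp add: abs_mult)
qed

context prob_space
begin

lemma prod_integrable:
  fixes f h :: "'a \<Rightarrow> real"
  assumes [measurable]: "f \<in> borel_measurable M" "h \<in> borel_measurable M"
    and "integrable M (\<lambda>\<omega>. (f \<omega>)\<^sup>2)" "integrable M (\<lambda>\<omega>. (h \<omega>)\<^sup>2)"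
  shows "integrable M (\<lambda>\<omega>. f \<omega> * h \<omega>)"
proof (rule Bochner_Integration.integrable_bound[of _ "\<lambda>\<omega>. (f \<omega>)\<^sup>2 + (h \<omega>)\<^sup>2"])
  show "integrable M (\<lambda>\<omega>. (f \<omega>)\<^sup>2 + (h \<omega>)\<^sup>2)" using assms by simp
  show "AE x in M. norm (f x * h x) \<le> norm ((f x)\<^sup>2 + (h x)\<^sup>2)"
    using abs_mult_le_sq by (simp add: abs_of_nonneg)
qed simp

lemma var_alt:
  fixes f :: "'a \<Rightarrow> real"
  assumes [measurable]: "f \<in> borel_measurable M" and sq: "integrable M (\<lambda>\<omega>. (f \<omega>)\<^sup>2)"
  shows "var M f = (\<integral>\<omega>. (f \<omega>)\<^sup>2 \<partial>M) - (\<integral>\<omega>. f \<omega> \<partial>M)\<^sup>2"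
proof -
  have fi: "integrable M f" by (rule square_integrable_imp_integrable[OF _ sq]) simp
  let ?m = "\<integral>\<omega>. f \<omega> \<partial>M"
  have "var M f = (\<integral>\<omega>. (f \<omega>)\<^sup>2 - 2 * ?m * f \<omega> + ?m\<^sup>2 \<partial>M)"
    unfolding var_def mean_def by (rule Bochner_Integration.integral_cong) (auto simp: power2_eq_square algebra_simps)
  also have "\<dots> = (\<integral>\<omega>. (f \<omega>)\<^sup>2 \<partial>M) - 2 * ?m * ?m + ?m\<^sup>2"
    using fi sq by (simp add: prob_space)
  finally show ?thesis by (simp add: power2_eq_square)
qed

lemma cov_alt:
  fixes f h :: "'a \<Rightarrow> real"
  assumes [measurable]: "f \<in> borel_measurable M" "h \<in> borel_measurable M"
    and sf: "integrable M (\<lambda>\<omega>. (f \<omega>)\<^sup>2)" and sh: "integrable M (\<lambda>\<omega>. (h \<omega>)\<^sup>2)"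
  shows "cov M f h = (\<integral>\<omega>. f \<omega> * h \<omega> \<partial>M) - (\<integral>\<omega>. f \<omega> \<partial>M) * (\<integral>\<omega>. h \<omega> \<partial>M)"
proof -
  have fi: "integrable M f" by (rule square_integrable_imp_integrable[OF _ sf]) simp
  have hi: "integrable M h" by (rule square_integrable_imp_integrable[OF _ sh]) simp
  have fh: "integrable M (\<lambda>\<omega>. f \<omega> * h \<omega>)" by (rule prod_integrable) fact+
  let ?m = "\<integral>\<omega>. f \<omega> \<partial>M" and ?n = "\<integral>\<omega>. h \<omega> \<partial>M"
  have "cov M f h = (\<integral>\<omega>. f \<omega> * h \<omega> - ?n * f \<omega> - ?m * h \<omega> + ?m * ?n \<partial>M)"
    unfolding cov_def mean_def by (rule Bochner_Integration.integral_cong) (auto simp: algebra_simps)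
  also have "\<dots> = (\<integral>\<omega>. f \<omega> * h \<omega> \<partial>M) - ?n * ?m - ?m * ?n + ?m * ?n"
    using fi hi fh by (simp add: prob_space)
  finally show ?thesis by simp
qed

end

lemma corr_eqV: "var M f = V \<Longrightarrow> var M h = V \<Longrightarrow> V > 0 \<Longrightarrow> corr M f h = cov M f h / V"
  by (simp add: corr_def)

lemma Vpos:
  fixes u v :: real
  assumes "0 < u" "u < 1" "0 < v" "v < 1"
  shows "u + v + 2 * min u v - (u + v)\<^sup>2 > 0"
proof -
  have a: "u * (1 - u) > 0" "v * (1 - v) > 0" using assms by simp_all
  have b: "u * (1 - v) \<ge> 0" "v * (1 - u) \<ge> 0" using assms by simp_all
  have "u + v + 2 * u - (u + v)\<^sup>2 = u * (1 - u) + v * (1 - v) + 2 * (u * (1 - v))"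
       "u + v + 2 * v - (u + v)\<^sup>2 = u * (1 - u) + v * (1 - v) + 2 * (v * (1 - u))"
    by (simp_all add: algebra_simps power2_eq_square)
  then show ?thesis using a b by (cases "u \<le> v") (simp_all add: min_def)
qed

definition ind :: "real \<Rightarrow> real \<Rightarrow> real" where "ind a x = (if x \<le> a then 1 else 0)"
definition gg :: "real \<Rightarrow> real \<Rightarrow> real \<Rightarrow> real" where "gg a b x = ind a x + ind b x"

lemma gg_meas[measurable]: "gg a b \<in> borel_measurable borel"
  unfolding gg_def ind_def by measurable

context prob_space
begin

lemma ind_meas[measurable]: "f \<in> borel_measurable M \<Longrightarrow> (\<lambda>\<omega>. ind a (f \<omega>)) \<in> borel_measurable M"
  unfolding ind_def by measurable

lemma ind2_integrable:
  assumes [measurable]: "f1 \<in> borel_measurable M" "f2 \<in> borel_measurable M"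
  shows "integrable M (\<lambda>\<omega>. ind a (f1 \<omega>) * ind b (f2 \<omega>))"
  by (rule integrable_const_bound[where B=1]) (auto simp: ind_def)

lemma E_ind2:
  assumes [measurable]: "f1 \<in> borel_measurable M" "f2 \<in> borel_measurable M"
  shows "(\<integral>\<omega>. ind a (f1 \<omega>) * ind b (f2 \<omega>) \<partial>M) = measure M {\<omega> \<in> space M. f1 \<omega> \<le> a \<and> f2 \<omega> \<le> b}"
proof -
  have "(\<integral>\<omega>. ind a (f1 \<omega>) * ind b (f2 \<omega>) \<partial>M) = (\<integral>\<omega>. indicator {\<omega> \<in> space M. f1 \<omega> \<le> a \<and> f2 \<omega> \<le> b} \<omega> \<partial>M)"
    by (rule Bochner_Integration.integral_cong) (auto simp: ind_def indicator_def)
  also have "\<dots> = measure M {\<omega> \<in> space M. f1 \<omega> \<le> a \<and> f2 \<omega> \<le> b}"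
    by (simp add: Int_absorb2 subset_iff)
  finally show ?thesis .
qed

lemma E_ind1:
  assumes [measurable]: "f \<in> borel_measurable M"
  shows "(\<integral>\<omega>. ind a (f \<omega>) \<partial>M) = measure M {\<omega> \<in> space M. f \<omega> \<le> a}"
proof -
  have "(\<integral>\<omega>. ind a (f \<omega>) \<partial>M) = (\<integral>\<omega>. ind a (f \<omega>) * ind a (f \<omega>) \<partial>M)"
    by (rule Bochner_Integration.integral_cong) (auto simp: ind_def)
  then show ?thesis using E_ind2[OF assms assms, of a a] by simp
qed

lemma ind1_integrable:
  assumes [measurable]: "f \<in> borel_measurable M"
  shows "integrable M (\<lambda>\<omega>. ind a (f \<omega>))"
  by (rule integrable_const_bound[where B=1]) (auto simp: ind_def)

lemma gg_sq_integrable: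
  assumes [measurable]: "f \<in> borel_measurable M"
  shows "integrable M (\<lambda>\<omega>. (gg a b (f \<omega>))\<^sup>2)"
  by (rule integrable_const_bound[where B=4]) (auto simp: gg_def ind_def)

lemma E_gg:
  assumes [measurable]: "f \<in> borel_measurable M"
  shows "(\<integral>\<omega>. gg a b (f \<omega>) \<partial>M) = measure M {\<omega> \<in> space M. f \<omega> \<le> a} + measure M {\<omega> \<in> space M. f \<omega> \<le> b}"
  unfolding gg_def using ind1_integrable[OF assms] by (simp add: E_ind1)

lemma E_gg2:
  assumes [measurable]: "f1 \<in> borel_measurable M" "f2 \<in> borel_measurable M"
  shows "(\<integral>\<omega>. gg a b (f1 \<omega>) * gg a b (f2 \<omega>) \<partial>M) =
    measure M {\<omega> \<in> space M. f1 \<omega> \<le> a \<and> f2 \<omega> \<le> a} + measure M {\<omega> \<in> space M. f1 \<omega> \<le> a \<and> f2 \<omega> \<le> b}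
  + measure M {\<omega> \<in> space M. f1 \<omega> \<le> b \<and> f2 \<omega> \<le> a} + measure M {\<omega> \<in> space M. f1 \<omega> \<le> b \<and> f2 \<omega> \<le> b}"
proof -
  have "(\<integral>\<omega>. gg a b (f1 \<omega>) * gg a b (f2 \<omega>) \<partial>M) = (\<integral>\<omega>. 
     (ind a (f1 \<omega>) * ind a (f2 \<omega>) + ind a (f1 \<omega>) * ind b (f2 \<omega>)) + (ind b (f1 \<omega>) * ind a (f2 \<omega>) + ind b (f1 \<omega>) * ind b (f2 \<omega>)) \<partial>M)"
    by (rule Bochner_Integration.integral_cong) (auto simp: gg_def algebra_simps)
  also have "\<dots> = ((\<integral>\<omega>. ind a (f1 \<omega>) * ind a (f2 \<omega>) \<partial>M) + (\<integral>\<omega>. ind a (f1 \<omega>) * ind b (f2 \<omega>) \<partial>M))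
     + ((\<integral>\<omega>. ind b (f1 \<omega>) * ind a (f2 \<omega>) \<partial>M) + (\<integral>\<omega>. ind b (f1 \<omega>) * ind b (f2 \<omega>) \<partial>M))"
    using ind2_integrable[OF assms] by (simp add: Bochner_Integration.integral_add)
  finally show ?thesis by (simp add: E_ind2)
qed

end

locale cor2 = prob_space M for M :: "'a measure" +
  fixes X Y :: "'a \<Rightarrow> real" and C :: "real \<Rightarrow> real \<Rightarrow> real"
  assumes Xm[measurable]: "X \<in> borel_measurable M" and Ym[measurable]: "Y \<in> borel_measurable M"
    and dfeq: "\<And>x. dfun M Y x = dfun M X x"
    and Fcont: "continuous_on UNIV (dfun M X)" and Fmono: "strict_mono (dfun M X)"
    and cop: "copula_of M X Y C"
begin

abbreviation "F \<equiv> dfun M X"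

lemma cdf_distr: "random_variable borel Z \<Longrightarrow> cdf (distr M borel Z) = dfun M Z"
  by (rule ext) (simp add: cdf_def measure_distr dfun_def vimage_def Int_def conj_commute)

lemma P_eq: "distr M borel Y = distr M borel X"
  by (rule cdf_unique) (auto simp: cdf_distr dfeq)

lemma F_bounds: "0 \<le> F x" "F x \<le> 1"
  by (auto simp: dfun_def)

lemma F_mono: "s \<le> t \<Longrightarrow> F s \<le> F t"
  using Fmono strict_mono_mono monoD by blast

lemma F_min: "F (min s t) = min (F s) (F t)"
  using F_mono[of s t] F_mono[of t s] by (auto simp: min_def)

lemma F_surj:
  assumes "0 < u" "u < 1" shows "\<exists>s. F s = u"
proof -
  interpret P: real_distribution "distr M borel X" by simp
  have lb: "(F \<longlongrightarrow> 0) at_bot" using P.cdf_lim_at_bot by (simp add: cdf_distr)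
  have lt: "(F \<longlongrightarrow> 1) at_top" using P.cdf_lim_at_top_prob by (simp add: cdf_distr)
  have "eventually (\<lambda>x. F x < u) at_bot" using order_tendstoD(2)[OF lb] assms by simp
  then obtain a where a: "\<And>x. x \<le> a \<Longrightarrow> F x < u" by (auto simp: eventually_at_bot_linorder)
  have "eventually (\<lambda>x. F x > u) at_top" using order_tendstoD(1)[OF lt] assms by simp
  then obtain b where b: "\<And>x. x \<ge> b \<Longrightarrow> F x > u" by (auto simp: eventually_at_top_linorder)
  let ?a = "min a b" and ?b = "max a b"
  have "F ?a \<le> u" using a[of ?a] by simp
  moreover have "u \<le> F ?b" using b[of ?b] by simp
  moreover have "continuous_on {?a..?b} F" using Fcont continuous_on_subset by blast
  moreover have "?a \<le> ?b" by simp
  ultimately show ?thesis using IVT'[of F ?a u ?b] by blast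
qed

abbreviation "Om \<equiv> rearr_space M"

lemma space_Om: "space Om = space M \<times> UNIV"
  by (simp add: rearr_space_def space_pair_measure)

lemma R_joint: "measure Om {p \<in> space Om. rearr1 X Y p \<le> x \<and> rearr2 X Y p \<le> y}
   = (measure M {\<omega> \<in> space M. X \<omega> \<le> x \<and> Y \<omega> \<le> y} + measure M {\<omega> \<in> space M. X \<omega> \<le> y \<and> Y \<omega> \<le> x}) / 2"
proof -
  have "{p \<in> space Om. rearr1 X Y p \<le> x \<and> rearr2 X Y p \<le> y} =
     {\<omega> \<in> space M. X \<omega> \<le> x \<and> Y \<omega> \<le> y} \<times> {True} \<union> {\<omega> \<in> space M. X \<omega> \<le> y \<and> Y \<omega> \<le> x} \<times> {False}"
    by (auto simp: space_Om rearr1_def rearr2_def)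
  then show ?thesis
    by (simp add: rearr_space_def measure_coin_union prob_space_axioms)
qed

lemma R1_df: "dfun Om (rearr1 X Y) x = F x"
proof -
  have "{p \<in> space Om. rearr1 X Y p \<le> x} =
     {\<omega> \<in> space M. X \<omega> \<le> x} \<times> {True} \<union> {\<omega> \<in> space M. Y \<omega> \<le> x} \<times> {False}"
    by (auto simp: space_Om rearr1_def)
  then show ?thesis using dfeq[of x]
    by (simp add: dfun_def rearr_space_def measure_coin_union prob_space_axioms)
qed

lemma R2_df: "dfun Om (rearr2 X Y) x = F x"
proof -
  have "{p \<in> space Om. rearr2 X Y p \<le> x} =
     {\<omega> \<in> space M. Y \<omega> \<le> x} \<times> {True} \<union> {\<omega> \<in> space M. X \<omega> \<le> x} \<times> {False}"
    by (auto simp: space_Om rearr2_def)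
  then show ?thesis using dfeq[of x]
    by (simp add: dfun_def rearr_space_def measure_coin_union prob_space_axioms)
qed

lemma C_cop: "is_copula C" using cop by (simp add: copula_of_def)

lemma C_bd: assumes "u \<in> {0..1}" shows "C u 0 = 0" "C 0 u = 0" "C u 1 = u" "C 1 u = u"
  using C_cop assms by (auto simp: is_copula_def)

lemma C_diag_nonneg: assumes "0 \<le> h" "h \<le> 1" shows "C h h \<ge> 0"
proof -
  have "\<forall>u1 u2 v1 v2. 0 \<le> u1 \<and> u1 \<le> u2 \<and> u2 \<le> 1 \<and> 0 \<le> v1 \<and> v1 \<le> v2 \<and> v2 \<le> 1 \<longrightarrow>
        C u2 v2 - C u2 v1 - C u1 v2 + C u1 v1 \<ge> 0" using C_cop unfolding is_copula_def by blast
  from this[rule_format, of 0 h 0 h] have "C h h - C h 0 - C 0 h + C 0 0 \<ge> 0" using assms by simp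
  then show ?thesis using C_bd[of h] C_bd[of 0] assms by simp
qed

definition cond2 :: "real \<Rightarrow> bool" where
  "cond2 r \<longleftrightarrow> (\<forall>u\<in>{0..1}. \<forall>v\<in>{0..1}. (C u v + C v u) / 2 = r * M_cop u v + (1 - r) * Pi_cop u v)"

lemma cond2_interior:
  assumes "\<And>u v. 0 < u \<Longrightarrow> u < 1 \<Longrightarrow> 0 < v \<Longrightarrow> v < 1 \<Longrightarrow> (C u v + C v u) / 2 = r * M_cop u v + (1 - r) * Pi_cop u v"
  shows "cond2 r"
  unfolding cond2_def
proof (intro ballI)
  fix u v :: real assume u: "u \<in> {0..1}" and v: "v \<in> {0..1}"
  show "(C u v + C v u) / 2 = r * M_cop u v + (1 - r) * Pi_cop u v"
  proof (cases "0 < u \<and> u < 1 \<and> 0 < v \<and> v < 1")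
    case True then show ?thesis using assms by blast
  next
    case False
    then have "u = 0 \<or> u = 1 \<or> v = 0 \<or> v = 1" using u v by auto
    then show ?thesis using C_bd[OF u] C_bd[OF v]
      using u v by (elim disjE) (auto simp: M_cop_def Pi_cop_def algebra_simps)
  qed
qed

lemma joint: "measure M {\<omega> \<in> space M. X \<omega> \<le> x \<and> Y \<omega> \<le> y} = C (F x) (F y)"
  using cop by (simp add: copula_of_def dfeq)


lemma cond2_nonneg: assumes "cond2 r" "r \<le> 1" shows "0 \<le> r"
proof (rule ccontr)
  assume "\<not> 0 \<le> r"
  then have r: "r < 0" by simp
  define h where "h = - r / (2 * (1 - r))"
  have h0: "0 < h" unfolding h_def using r by (intro divide_pos_pos) auto
  have h1: "h \<le> 1" using r assms(2) by (simp add: h_def field_simps)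
  have "(C h h + C h h) / 2 = r * M_cop h h + (1 - r) * Pi_cop h h"
    using assms(1) h0 h1 unfolding cond2_def by auto
  then have "C h h = h * (r + (1 - r) * h)" by (simp add: M_cop_def Pi_cop_def algebra_simps power2_eq_square)
  also have "r + (1 - r) * h = r / 2" using r by (simp add: h_def field_simps)
  finally have "C h h = h * (r / 2)" .
  moreover have "h * (r / 2) < 0" using h0 r by (simp add: mult_pos_neg)
  ultimately show False using C_diag_nonneg[of h] h0 h1 by simp
qed

lemma ii_iii:
  assumes "r \<le> 1"
  shows "cond2 r \<longleftrightarrow> r \<in> {0..1} \<and> copula_of Om (rearr1 X Y) (rearr2 X Y) (frechet r)"
proof
  assume c: "cond2 r"
  have r0: "0 \<le> r" using cond2_nonneg[OF c assms] .
  have "measure Om {p \<in> space Om. rearr1 X Y p \<le> x \<and> rearr2 X Y p \<le> y}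
      = frechet r (dfun Om (rearr1 X Y) x) (dfun Om (rearr2 X Y) y)" for x y
  proof -
    have "measure Om {p \<in> space Om. rearr1 X Y p \<le> x \<and> rearr2 X Y p \<le> y} = (C (F x) (F y) + C (F y) (F x)) / 2"
      using R_joint joint by simp
    also have "\<dots> = frechet r (F x) (F y)"
      using c F_bounds unfolding cond2_def frechet_def by auto
    finally show ?thesis by (simp add: R1_df R2_df)
  qed
  then show "r \<in> {0..1} \<and> copula_of Om (rearr1 X Y) (rearr2 X Y) (frechet r)"
    using r0 assms frechet_copula by (auto simp: copula_of_def)
next
  assume h: "r \<in> {0..1} \<and> copula_of Om (rearr1 X Y) (rearr2 X Y) (frechet r)"
  show "cond2 r"
  proof (rule cond2_interior)
    fix u v :: real assume "0 < u" "u < 1" "0 < v" "v < 1"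
    then obtain s t where s: "F s = u" and t: "F t = v" using F_surj by metis
    have "(C u v + C v u) / 2 = measure Om {p \<in> space Om. rearr1 X Y p \<le> s \<and> rearr2 X Y p \<le> t}"
      using R_joint joint s t by simp
    also have "\<dots> = frechet r u v" using h s t by (simp add: copula_of_def R1_df R2_df)
    finally show "(C u v + C v u) / 2 = r * M_cop u v + (1 - r) * Pi_cop u v" by (simp add: frechet_def)
  qed
qed


definition "Pm = distr M borel X"
definition "Om2 r = (Pm \<Otimes>\<^sub>M Pm) \<Otimes>\<^sub>M measure_pmf (bernoulli_pmf r)"
definition "W = (\<lambda>q :: (real \<times> real) \<times> bool. (fst (fst q), if snd q then fst (fst q) else snd (fst q)))"
definition "Z = (\<lambda>p. (rearr1 X Y p, rearr2 X Y p))"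

lemma Pm_prob: "prob_space Pm" unfolding Pm_def by (simp add: prob_space_distr)
lemma sets_Pm[measurable_cong]: "sets Pm = sets borel" unfolding Pm_def by simp
lemma Pm_atMost: "measure Pm {..z} = F z"
  using cdf_distr[of X] unfolding Pm_def cdf_def by (simp add: fun_eq_iff)

lemma Om2_prob: "prob_space (Om2 r)"
  unfolding Om2_def
  by (intro prob_space_pair Pm_prob prob_space_measure_pmf)

lemma W_meas[measurable]: "W \<in> measurable (Om2 r) borel"
  unfolding W_def Om2_def by measurable

lemma Z_meas[measurable]: "Z \<in> measurable Om borel"
  unfolding Z_def rearr1_def rearr2_def rearr_space_def by measurable

lemma law_eq:
  assumes c: "cond2 r" and r: "0 \<le> r" "r \<le> 1"
  shows "distr Om borel Z = distr (Om2 r) borel W"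
proof (rule atMost_generator_eq)
  have "prob_space Om" unfolding rearr_space_def
    by (intro prob_space_pair prob_space_axioms prob_space_measure_pmf)
  then show "finite_measure (distr Om borel Z)"
    by (intro pfm prob_space.prob_space_distr) auto
  show "finite_measure (distr (Om2 r) borel W)"
    using Om2_prob by (intro pfm prob_space.prob_space_distr) auto
  fix x y :: real
  have "measure (distr Om borel Z) {..(x,y)} = measure Om {p \<in> space Om. rearr1 X Y p \<le> x \<and> rearr2 X Y p \<le> y}"
  proof -
    have "Z -` {..(x,y)} \<inter> space Om = {p \<in> space Om. rearr1 X Y p \<le> x \<and> rearr2 X Y p \<le> y}"
      by (auto simp: Z_def)
    then show ?thesis by (subst measure_distr[OF Z_meas]) auto
  qed
  also have "\<dots> = (C (F x) (F y) + C (F y) (F x)) / 2"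
    using R_joint joint by simp
  also have "\<dots> = r * min (F x) (F y) + (1 - r) * (F x * F y)"
    using c F_bounds unfolding cond2_def M_cop_def Pi_cop_def by auto
  also have "\<dots> = measure (distr (Om2 r) borel W) {..(x,y)}"
  proof -
    have PP: "prob_space (Pm \<Otimes>\<^sub>M Pm)" by (intro prob_space_pair Pm_prob)
    have "W -` {..(x,y)} \<inter> space (Om2 r) = ({..min x y} \<times> UNIV) \<times> {True} \<union> ({..x} \<times> {..y}) \<times> {False}"
      by (auto simp: W_def Om2_def space_pair_measure sets_eq_imp_space_eq[OF sets_Pm] split: if_splits)
    then have "measure (distr (Om2 r) borel W) {..(x,y)} = measure (Om2 r) (({..min x y} \<times> UNIV) \<times> {True} \<union> ({..x} \<times> {..y}) \<times> {False})"
      by (subst measure_distr) auto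
    also have "\<dots> = r * measure (Pm \<Otimes>\<^sub>M Pm) ({..min x y} \<times> UNIV) + (1 - r) * measure (Pm \<Otimes>\<^sub>M Pm) ({..x} \<times> {..y})"
      unfolding Om2_def by (rule measure_coin_union[OF PP r]) auto
    also have "\<dots> = r * F (min x y) + (1 - r) * (F x * F y)"
      using Pm_prob sets_eq_imp_space_eq[OF sets_Pm] prob_space.prob_space[OF Pm_prob]
      by (simp add: measure_pair_Times_prob Pm_atMost)
    finally show ?thesis by (simp add: F_min)
  qed
  finally show "measure (distr Om borel Z) {..(x,y)} = measure (distr (Om2 r) borel W) {..(x,y)}" .
qed auto


lemma Pm_int: "(f :: real \<Rightarrow> real) \<in> borel_measurable borel \<Longrightarrow> integral\<^sup>L Pm f = (\<integral>\<omega>. f (X \<omega>) \<partial>M)"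
  unfolding Pm_def by (rule integral_distr) auto

lemma Pm_integrable: "(f :: real \<Rightarrow> real) \<in> borel_measurable borel \<Longrightarrow> integrable Pm f \<longleftrightarrow> integrable M (\<lambda>\<omega>. f (X \<omega>))"
  unfolding Pm_def by (rule integrable_distr_eq) auto

lemma PP_fst_eq: "distr (Pm \<Otimes>\<^sub>M Pm) Pm fst = Pm"
  using prob_space.distr_pair_fst[OF Pm_prob, of Pm] .

lemma PP_fst_int: "(f :: real \<Rightarrow> real) \<in> borel_measurable borel \<Longrightarrow> (\<integral>z. f (fst z) \<partial>(Pm \<Otimes>\<^sub>M Pm)) = integral\<^sup>L Pm f"
  using integral_distr[of fst "Pm \<Otimes>\<^sub>M Pm" Pm f] PP_fst_eq by (simp add: measurable_cong_sets[OF _ sets_Pm])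

lemma PP_fst_integrable: "(f :: real \<Rightarrow> real) \<in> borel_measurable borel \<Longrightarrow> integrable Pm f \<Longrightarrow> integrable (Pm \<Otimes>\<^sub>M Pm) (\<lambda>z. f (fst z))"
  using integrable_distr_eq[of fst "Pm \<Otimes>\<^sub>M Pm" Pm f] PP_fst_eq by (simp add: measurable_cong_sets[OF _ sets_Pm])

lemma key_integral:
  assumes c: "cond2 r" and r: "0 \<le> r" "r \<le> 1"
    and g[measurable]: "g \<in> borel_measurable borel"
    and sq: "integrable M (\<lambda>\<omega>. (g (X \<omega>))\<^sup>2)"
  shows "(\<integral>\<omega>. g (X \<omega>) * g (Y \<omega>) \<partial>M) = r * (\<integral>\<omega>. (g (X \<omega>))\<^sup>2 \<partial>M) + (1 - r) * (\<integral>\<omega>. g (X \<omega>) \<partial>M)\<^sup>2"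
proof -
  let ?h = "\<lambda>z::real\<times>real. g (fst z) * g (snd z)"
  let ?K = "measure_pmf (bernoulli_pmf r)"
  let ?PP = "Pm \<Otimes>\<^sub>M Pm"
  have hm: "?h \<in> borel_measurable borel" unfolding borel_prod[symmetric] by measurable
  have "integral\<^sup>L (distr Om borel Z) ?h = (\<integral>p. ?h (Z p) \<partial>Om)"
    by (rule integral_distr[OF Z_meas hm])
  also have "\<dots> = (\<integral>p. g (X (fst p)) * g (Y (fst p)) \<partial>Om)"
    by (rule Bochner_Integration.integral_cong) (auto simp: Z_def rearr1_def rearr2_def)
  also have "\<dots> = (\<integral>\<omega>. g (X \<omega>) * g (Y \<omega>) \<partial>distr Om M fst)"
    by (rule integral_distr[symmetric]) (auto simp: rearr_space_def)
  also have "distr Om M fst = M"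
    unfolding rearr_space_def by (rule prob_space.distr_pair_fst[OF prob_space_measure_pmf])
  finally have L: "integral\<^sup>L (distr Om borel Z) ?h = (\<integral>\<omega>. g (X \<omega>) * g (Y \<omega>) \<partial>M)" .

  have gP2: "integrable Pm (\<lambda>a. (g a)\<^sup>2)" using sq by (subst Pm_integrable) auto
  interpret PmP: prob_space Pm by (rule Pm_prob)
  have gP: "integrable Pm g" by (rule PmP.square_integrable_imp_integrable[OF _ gP2]) (simp add: measurable_cong_sets[OF sets_Pm])
  interpret PPP: pair_sigma_finite Pm Pm
    by (simp add: pair_sigma_finite_def prob_space_imp_sigma_finite Pm_prob)
  have I1: "integrable ?PP (\<lambda>z. (g (fst z))\<^sup>2)"
    by (rule PP_fst_integrable[OF _ gP2]) simp
  have I2: "integrable ?PP ?h"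
  proof (rule PPP.Fubini_integrable)
    show "?h \<in> borel_measurable ?PP" by (simp add: measurable_cong_sets[OF _ sets_Pm])
    have "integrable Pm (\<lambda>x. \<bar>g x\<bar> * (\<integral>y. \<bar>g y\<bar> \<partial>Pm))"
      using gP by (intro integrable_mult_left integrable_abs)
    moreover have "(\<integral>y. norm (?h (x, y)) \<partial>Pm) = \<bar>g x\<bar> * (\<integral>y. \<bar>g y\<bar> \<partial>Pm)" for x
      by (simp add: abs_mult)
    ultimately show "integrable Pm (\<lambda>x. \<integral>y. norm (?h (x, y)) \<partial>Pm)" by simp
    show "AE x in Pm. integrable Pm (\<lambda>y. ?h (x, y))"
      using gP by (auto intro!: integrable_mult_right)
  qed
  have PPi: "integral\<^sup>L ?PP ?h = (\<integral>\<omega>. g (X \<omega>) \<partial>M)\<^sup>2"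
  proof -
    have "integral\<^sup>L ?PP ?h = (\<integral>x. (\<integral>y. ?h (x, y) \<partial>Pm) \<partial>Pm)"
      by (rule PPP.integral_fst'[OF I2, symmetric])
    also have "\<dots> = (\<integral>x. g x * integral\<^sup>L Pm g \<partial>Pm)" by simp
    also have "\<dots> = (integral\<^sup>L Pm g)\<^sup>2" by (simp add: power2_eq_square)
    finally show ?thesis by (simp add: Pm_int)
  qed
  have PP1: "(\<integral>z. (g (fst z))\<^sup>2 \<partial>?PP) = (\<integral>\<omega>. (g (X \<omega>))\<^sup>2 \<partial>M)"
    using PP_fst_int[of "\<lambda>a. (g a)\<^sup>2"] Pm_int[of "\<lambda>a. (g a)\<^sup>2"] by simp

  interpret PK: pair_sigma_finite ?PP ?K
    by (simp add: pair_sigma_finite_def prob_space_imp_sigma_finite Pm_prob prob_space_pair prob_space_measure_pmf)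
  let ?f = "\<lambda>q :: (real\<times>real)\<times>bool. ?h (W q)"
  have inner: "(\<integral>c. ?f (z, c) \<partial>?K) = r * (g (fst z))\<^sup>2 + (1 - r) * ?h z" for z
    using r by (simp add: integral_bernoulli W_def power2_eq_square algebra_simps)
  have innerabs: "(\<integral>c. norm (?f (z, c)) \<partial>?K) = r * \<bar>(g (fst z))\<^sup>2\<bar> + (1 - r) * \<bar>?h z\<bar>" for z
    using r by (simp add: integral_bernoulli W_def power2_eq_square)
  have If: "integrable (?PP \<Otimes>\<^sub>M ?K) ?f"
  proof (rule PK.Fubini_integrable)
    show "?f \<in> borel_measurable (?PP \<Otimes>\<^sub>M ?K)"
      using W_meas[of r] hm unfolding Om2_def by measurable
    show "integrable ?PP (\<lambda>z. \<integral>c. norm (?f (z, c)) \<partial>?K)"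
      unfolding innerabs using integrable_abs[OF I1] integrable_abs[OF I2] by (intro Bochner_Integration.integrable_add integrable_mult_right) auto
    show "AE z in ?PP. integrable ?K (\<lambda>c. ?f (z, c))"
      by (auto intro!: integrable_measure_pmf_finite)
  qed
  have "integral\<^sup>L (distr (Om2 r) borel W) ?h = integral\<^sup>L (?PP \<Otimes>\<^sub>M ?K) ?f"
    unfolding Om2_def by (rule integral_distr[OF W_meas[of r, unfolded Om2_def] hm])
  also have "\<dots> = (\<integral>z. (\<integral>c. ?f (z, c) \<partial>?K) \<partial>?PP)"
    by (rule PK.integral_fst'[OF If, symmetric])
  also have "\<dots> = (\<integral>z. r * (g (fst z))\<^sup>2 + (1 - r) * ?h z \<partial>?PP)"
    unfolding inner ..
  also have "\<dots> = r * (\<integral>z. (g (fst z))\<^sup>2 \<partial>?PP) + (1 - r) * integral\<^sup>L ?PP ?h"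
    using I1 I2 by simp
  finally have R: "integral\<^sup>L (distr (Om2 r) borel W) ?h = r * (\<integral>\<omega>. (g (X \<omega>))\<^sup>2 \<partial>M) + (1 - r) * (\<integral>\<omega>. g (X \<omega>) \<partial>M)\<^sup>2"
    unfolding PP1 PPi .
  show ?thesis using L R law_eq[OF c r] by simp
qed


lemma cond2_IC:
  assumes c: "cond2 r" and r1: "r \<le> 1" and LX: "L2 M X" and LY: "L2 M Y"
  shows "IC M r X Y"
proof -
  have r0: "0 \<le> r" using cond2_nonneg[OF c r1] .
  have main: "corr M (\<lambda>\<omega>. g (X \<omega>)) (\<lambda>\<omega>. g (Y \<omega>)) = r"
    if g[measurable]: "g \<in> borel_measurable borel" and L: "L2 M (\<lambda>\<omega>. g (X \<omega>))" for g
  proof -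
    have sq: "integrable M (\<lambda>\<omega>. (g (X \<omega>))\<^sup>2)" using L by (simp add: L2_def)
    have g2[measurable]: "(\<lambda>x. (g x)\<^sup>2) \<in> borel_measurable borel" by measurable
    have eq1: "(\<integral>\<omega>. g (Y \<omega>) \<partial>M) = (\<integral>\<omega>. g (X \<omega>) \<partial>M)"
      using integral_distr[OF Ym g] integral_distr[OF Xm g] P_eq by simp
    have eq2: "(\<integral>\<omega>. (g (Y \<omega>))\<^sup>2 \<partial>M) = (\<integral>\<omega>. (g (X \<omega>))\<^sup>2 \<partial>M)"
      using integral_distr[OF Ym g2] integral_distr[OF Xm g2] P_eq by simp
    have sqY: "integrable M (\<lambda>\<omega>. (g (Y \<omega>))\<^sup>2)"
      using integrable_distr_eq[OF Ym g2] integrable_distr_eq[OF Xm g2] P_eq sq by simp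
    let ?m = "\<integral>\<omega>. g (X \<omega>) \<partial>M" and ?E = "\<integral>\<omega>. (g (X \<omega>))\<^sup>2 \<partial>M"
    have vX: "var M (\<lambda>\<omega>. g (X \<omega>)) = ?E - ?m\<^sup>2" by (rule var_alt[OF _ sq]) simp
    have vY: "var M (\<lambda>\<omega>. g (Y \<omega>)) = ?E - ?m\<^sup>2" using var_alt[OF _ sqY] eq1 eq2 by simp
    have V: "?E - ?m\<^sup>2 > 0" using L vX by (simp add: L2_def)
    have "cov M (\<lambda>\<omega>. g (X \<omega>)) (\<lambda>\<omega>. g (Y \<omega>)) = (\<integral>\<omega>. g (X \<omega>) * g (Y \<omega>) \<partial>M) - ?m * ?m"
      using cov_alt[OF _ _ sq sqY] eq1 by simp
    also have "\<dots> = r * (?E - ?m\<^sup>2)"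
      using key_integral[OF c r0 r1 g sq] by (simp add: algebra_simps power2_eq_square)
    finally have cv: "cov M (\<lambda>\<omega>. g (X \<omega>)) (\<lambda>\<omega>. g (Y \<omega>)) = r * (?E - ?m\<^sup>2)" .
    show ?thesis using corr_eqV[OF vX vY V] cv V by simp
  qed
  have "corr M X Y = r" using main[of "\<lambda>x. x"] LX by simp
  then show ?thesis unfolding IC_def using main by blast
qed

lemma IC_cond2:
  assumes ic: "IC M r X Y"
  shows "cond2 r"
proof -
  have key: "C (F a) (F a) + C (F a) (F b) + C (F b) (F a) + C (F b) (F b) - (F a + F b)\<^sup>2
      = r * (F a + F b + 2 * min (F a) (F b) - (F a + F b)\<^sup>2)"
    if "0 < F a" "F a < 1" "0 < F b" "F b < 1" for a b
  proof -
    let ?f = "\<lambda>\<omega>. gg a b (X \<omega>)" and ?h = "\<lambda>\<omega>. gg a b (Y \<omega>)"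
    have sX: "\<And>c. {\<omega> \<in> space M. X \<omega> \<le> c} = {\<omega> \<in> space M. X \<omega> \<le> c \<and> X \<omega> \<le> c}" by auto
    have mX: "\<And>c d. measure M {\<omega> \<in> space M. X \<omega> \<le> c \<and> X \<omega> \<le> d} = F (min c d)"
      unfolding dfun_def by (rule arg_cong[where f="measure M"]) auto
    have mY: "\<And>c d. measure M {\<omega> \<in> space M. Y \<omega> \<le> c \<and> Y \<omega> \<le> d} = F (min c d)"
    proof -
      fix c d
      have "measure M {\<omega> \<in> space M. Y \<omega> \<le> c \<and> Y \<omega> \<le> d} = dfun M Y (min c d)"
        unfolding dfun_def by (rule arg_cong[where f="measure M"]) auto
      then show "measure M {\<omega> \<in> space M. Y \<omega> \<le> c \<and> Y \<omega> \<le> d} = F (min c d)" by (simp add: dfeq)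
    qed
    have m1X: "\<And>c. measure M {\<omega> \<in> space M. X \<omega> \<le> c} = F c" by (simp add: dfun_def)
    have m1Y: "\<And>c. measure M {\<omega> \<in> space M. Y \<omega> \<le> c} = F c" using dfeq unfolding dfun_def by simp
    have EX: "(\<integral>\<omega>. ?f \<omega> \<partial>M) = F a + F b" using E_gg[OF Xm, of a b] m1X by simp
    have EY: "(\<integral>\<omega>. ?h \<omega> \<partial>M) = F a + F b" using E_gg[OF Ym, of a b] m1Y by simp
    have EX2: "(\<integral>\<omega>. (?f \<omega>)\<^sup>2 \<partial>M) = F a + F b + 2 * min (F a) (F b)"
      using E_gg2[OF Xm Xm, of a b] mX m1X by (simp add: power2_eq_square F_min min.commute)
    have EY2: "(\<integral>\<omega>. (?h \<omega>)\<^sup>2 \<partial>M) = F a + F b + 2 * min (F a) (F b)"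
      using E_gg2[OF Ym Ym, of a b] mY m1Y by (simp add: power2_eq_square F_min min.commute)
    have EXY: "(\<integral>\<omega>. ?f \<omega> * ?h \<omega> \<partial>M) = C (F a) (F a) + C (F a) (F b) + C (F b) (F a) + C (F b) (F b)"
      using E_gg2[OF Xm Ym, of a b] by (simp add: joint)
    let ?V = "F a + F b + 2 * min (F a) (F b) - (F a + F b)\<^sup>2"
    have sqf: "integrable M (\<lambda>\<omega>. (?f \<omega>)\<^sup>2)" by (rule gg_sq_integrable) simp
    have sqh: "integrable M (\<lambda>\<omega>. (?h \<omega>)\<^sup>2)" by (rule gg_sq_integrable) simp
    have vX: "var M ?f = ?V" using var_alt[OF _ sqf] EX EX2 by simp
    have vY: "var M ?h = ?V" using var_alt[OF _ sqh] EY EY2 by simp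
    have V: "?V > 0" using Vpos that by blast
    have "L2 M ?f" "L2 M ?h" using sqf sqh vX vY V by (simp_all add: L2_def)
    then have "corr M ?f ?h = r" using ic gg_meas unfolding IC_def by blast
    then have "cov M ?f ?h = r * ?V" using corr_eqV[OF vX vY V] V by (simp add: field_simps)
    moreover have "cov M ?f ?h = C (F a) (F a) + C (F a) (F b) + C (F b) (F a) + C (F b) (F b) - (F a + F b)\<^sup>2"
      using cov_alt[OF _ _ sqf sqh] EX EY EXY by (simp add: power2_eq_square)
    ultimately show ?thesis by simp
  qed
  show ?thesis
  proof (rule cond2_interior)
    fix u v :: real assume uv: "0 < u" "u < 1" "0 < v" "v < 1"
    then obtain s t where s: "F s = u" and t: "F t = v" using F_surj by metis
    have A: "4 * C u u - 4 * u\<^sup>2 = r * (4 * u - 4 * u\<^sup>2)"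
      using key[of s s] uv s by (simp add: power2_eq_square algebra_simps)
    have B: "4 * C v v - 4 * v\<^sup>2 = r * (4 * v - 4 * v\<^sup>2)"
      using key[of t t] uv t by (simp add: power2_eq_square algebra_simps)
    have D: "C u u + C u v + C v u + C v v - (u + v)\<^sup>2 = r * (u + v + 2 * min u v - (u + v)\<^sup>2)"
      using key[of s t] uv s t by simp
    have "C u v + C v u = 2 * (u * v) + r * (2 * min u v - 2 * (u * v))"
      using A B D by (simp add: power2_eq_square algebra_simps)
    then have "(C u v + C v u) / 2 = (2 * (u * v) + r * (2 * min u v - 2 * (u * v))) / 2" by simp
    also have "\<dots> = r * min u v + (1 - r) * (u * v)" by (simp add: field_simps)
    finally show "(C u v + C v u) / 2 = r * M_cop u v + (1 - r) * Pi_cop u v"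
      by (simp add: M_cop_def Pi_cop_def)
  qed
qed

end

theorem corollary2:
  fixes M :: "'a measure" and X Y :: "'a \<Rightarrow> real"
    and C :: "real \<Rightarrow> real \<Rightarrow> real" and r :: real
  assumes "prob_space M"
    and "L2 M X" and "L2 M Y"
    and "\<forall>x. dfun M X x = dfun M Y x"
    and "continuous_on UNIV (dfun M X)" and "strict_mono (dfun M X)"
    and "copula_of M X Y C"
    and "r \<in> {-1..1}"
  shows "(IC M r X Y \<longleftrightarrow>
           (\<forall>u\<in>{0..1}. \<forall>v\<in>{0..1}. (C u v + C v u) / 2 = r * M_cop u v + (1 - r) * Pi_cop u v))
       \<and> ((\<forall>u\<in>{0..1}. \<forall>v\<in>{0..1}. (C u v + C v u) / 2 = r * M_cop u v + (1 - r) * Pi_cop u v)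
           \<longleftrightarrow> r \<in> {0..1} \<and> copula_of (rearr_space M) (rearr1 X Y) (rearr2 X Y) (frechet r))"
proof -
  interpret cor2 M X Y C
  proof (intro cor2.intro cor2_axioms.intro)
    show "prob_space M" by fact
    show "X \<in> borel_measurable M" "Y \<in> borel_measurable M" using assms(2,3) by (simp_all add: L2_def)
    show "\<And>x. dfun M Y x = dfun M X x" using assms(4) by simp
  qed (use assms in auto)
  have r1: "r \<le> 1" using assms(8) by simp
  have e: "(\<forall>u\<in>{0..1}. \<forall>v\<in>{0..1}. (C u v + C v u) / 2 = r * M_cop u v + (1 - r) * Pi_cop u v) = cond2 r"
    by (simp add: cond2_def)
  show ?thesis unfolding e using IC_cond2 cond2_IC[OF _ r1 assms(2,3)] ii_iii[OF r1] by blast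
qed

end
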